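(* Let $\mathcal{A}$ be an $n$-dimensional complex anticommutative algebra of (finite) length $k$. Then there exists an $n$-dimensional nilpotent anticommutative algebra with nilpotency index $k+1$.
   Context: Length: for a finite subset $S$ of an algebra $\mathcal{A}$, a word in $S$ is any product, with any bracketing, of finitely many elements of $S$; its length is the number of factors. $S^i$ is the set of words of length $\le i$, $\mathcal{L}_i(S)$ is the linear span of $S^i$, and $\mathcal{L}(S)=\bigcup_i\mathcal{L}_i(S)$. If $\mathcal{L}(S)=\mathcal{A}$ ($S$ generates $\mathcal{A}$), $l(S)=\min\{i\ge1:\mathcal{L}_i(S)=\mathcal{A}\}$. The length of $\mathcal{A}$ is $l(\mathcal{A})=\sup\{l(S): S\subseteq\mathcal{A}\text{ finite}, \mathcal{L}(S)=\mathcal{A}\}$. Nilpotency: $N^1=N$, $N^{k+1}=\sum_{i=1}^kN^iN^{k+1-i}$; nilpotency index is the least $k$ with $N^k=0$. Anticommutative means $xy=-yx$. *)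

theory Defs
  imports "HOL-Analysis.Analysis"
begin

text \<open>An algebra of dimension n = CARD('n) over the complex numbers is modelled as
  the complex vector space complex^'n together with a complex-bilinear product m.\<close>

type_synonym ('n) cvec = "complex ^ ('n::finite)"

definition cbilinear :: "(('n::finite) cvec \<Rightarrow> ('n::finite) cvec \<Rightarrow> ('n::finite) cvec) \<Rightarrow> bool" where
  "cbilinear m \<longleftrightarrow>
     (\<forall>y. Vector_Spaces.linear (*s) (*s) (\<lambda>x. m x y)) \<and>
     (\<forall>x. Vector_Spaces.linear (*s) (*s) (\<lambda>y. m x y))"

definition anticommutative :: "(('n::finite) cvec \<Rightarrow> ('n::finite) cvec \<Rightarrow> ('n::finite) cvec) \<Rightarrow> bool" where
  "anticommutative m \<longleftrightarrow> (\<forall>x y. m x y = - m y x)"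

text \<open>word m S x l: x is a word in S (any bracketing) with l factors.\<close>
inductive word :: "(('n::finite) cvec \<Rightarrow> ('n::finite) cvec \<Rightarrow> ('n::finite) cvec) \<Rightarrow> ('n::finite) cvec set \<Rightarrow> ('n::finite) cvec \<Rightarrow> nat \<Rightarrow> bool"
  for m S where
  single: "x \<in> S \<Longrightarrow> word m S x 1"
| prod: "word m S x i \<Longrightarrow> word m S y j \<Longrightarrow> word m S (m x y) (i + j)"

definition words_upto :: "(('n::finite) cvec \<Rightarrow> ('n::finite) cvec \<Rightarrow> ('n::finite) cvec) \<Rightarrow> ('n::finite) cvec set \<Rightarrow> nat \<Rightarrow> ('n::finite) cvec set" where
  "words_upto m S i = {x. \<exists>l\<le>i. word m S x l}"

definition Lspan :: "(('n::finite) cvec \<Rightarrow> ('n::finite) cvec \<Rightarrow> ('n::finite) cvec) \<Rightarrow> ('n::finite) cvec set \<Rightarrow> nat \<Rightarrow> ('n::finite) cvec set" where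
  "Lspan m S i = vec.span (words_upto m S i)"

definition generates :: "(('n::finite) cvec \<Rightarrow> ('n::finite) cvec \<Rightarrow> ('n::finite) cvec) \<Rightarrow> ('n::finite) cvec set \<Rightarrow> bool" where
  "generates m S \<longleftrightarrow> (\<Union>i. Lspan m S i) = UNIV"

definition set_length :: "(('n::finite) cvec \<Rightarrow> ('n::finite) cvec \<Rightarrow> ('n::finite) cvec) \<Rightarrow> ('n::finite) cvec set \<Rightarrow> nat" where
  "set_length m S = (LEAST i. 1 \<le> i \<and> Lspan m S i = UNIV)"

text \<open>The length of the algebra is (finite and) equal to k: k is the supremum of the
  lengths of finite generating sets (the supremum is attained, being finite).\<close>
definition has_length :: "(('n::finite) cvec \<Rightarrow> ('n::finite) cvec \<Rightarrow> ('n::finite) cvec) \<Rightarrow> nat \<Rightarrow> bool" where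
  "has_length m k \<longleftrightarrow>
     (\<forall>S. finite S \<and> generates m S \<longrightarrow> set_length m S \<le> k) \<and>
     (\<exists>S. finite S \<and> generates m S \<and> set_length m S = k)"

text \<open>Powers N^1 = N, N^(k+1) = sum_{i=1..k} N^i N^(k+1-i), where the product of
  subspaces is the span of pairwise products and sums of subspaces are spans of unions.\<close>
function pw :: "(('n::finite) cvec \<Rightarrow> ('n::finite) cvec \<Rightarrow> ('n::finite) cvec) \<Rightarrow> nat \<Rightarrow> ('n::finite) cvec set" where
  "pw m 0 = UNIV"
| "pw m (Suc 0) = UNIV"
| "pw m (Suc (Suc k)) =
     vec.span (\<Union>i\<in>{1..Suc k}. {m x y | x y. x \<in> pw m i \<and> y \<in> pw m (Suc (Suc k) - i)})"
  by pat_completeness auto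
termination
  by (relation "Wellfounded.measure (\<lambda>(m, k). k)") auto

definition nilpotent :: "(('n::finite) cvec \<Rightarrow> ('n::finite) cvec \<Rightarrow> ('n::finite) cvec) \<Rightarrow> bool" where
  "nilpotent m \<longleftrightarrow> (\<exists>k\<ge>1. pw m k = {0})"

definition nilpotency_index :: "(('n::finite) cvec \<Rightarrow> ('n::finite) cvec \<Rightarrow> ('n::finite) cvec) \<Rightarrow> nat" where
  "nilpotency_index m = (LEAST k. 1 \<le> k \<and> pw m k = {0})"

end

theory Submission
  imports Defs
begin


lemma word_ge1: "word m S x l \<Longrightarrow> 1 \<le> l"
  by (induction rule: word.induct) auto

lemma Lspan_0: "Lspan m S 0 = {0}"
proof -
  have "words_upto m S 0 = {}" by (auto simp: words_upto_def dest: word_ge1)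
  then show ?thesis by (simp add: Lspan_def vec.span_empty)
qed

lemma Lspan_mono: "i \<le> j \<Longrightarrow> Lspan m S i \<subseteq> Lspan m S j"
  unfolding Lspan_def by (rule vec.span_mono) (auto simp: words_upto_def intro: le_trans)

lemma Lspan_subspace: "vec.subspace (Lspan m S i)"
  unfolding Lspan_def by (rule vec.subspace_span)

lemma subspace_vimage:
  assumes "Vector_Spaces.linear (*s) (*s) (f::complex^'n \<Rightarrow> complex^'n)" "vec.subspace T"
  shows "vec.subspace {x. f x \<in> T}"
  using assms unfolding vec.subspace_def
  by (simp add: vec.linear_add vec.linear_scale vec.linear_0)

lemma bil_span:
  assumes "cbilinear m" "x \<in> vec.span A" "y \<in> vec.span C" "vec.subspace T"
    "\<And>a c. a\<in>A \<Longrightarrow> c\<in>C \<Longrightarrow> m a c \<in> T"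
  shows "m x y \<in> T"
proof -
  have lx: "Vector_Spaces.linear (*s) (*s) (\<lambda>x. m x y)" for y
    using assms(1) by (simp add: cbilinear_def)
  have ly: "Vector_Spaces.linear (*s) (*s) (\<lambda>y. m x y)" for x
    using assms(1) by (simp add: cbilinear_def)
  have 1: "m x c \<in> T" if "c \<in> C" for c
    using vec.span_induct[OF assms(2) subspace_vimage[OF lx assms(4)], of c] assms(5) that by auto
  show ?thesis
    using vec.span_induct[OF assms(3) subspace_vimage[OF ly assms(4)], of x] 1 by auto
qed

lemma Lspan_mult:
  assumes "cbilinear m" "x \<in> Lspan m S a" "y \<in> Lspan m S b"
  shows "m x y \<in> Lspan m S (a+b)"
proof (rule bil_span[OF assms(1)])
  show "x \<in> vec.span (words_upto m S a)" using assms(2) by (simp add: Lspan_def)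
  show "y \<in> vec.span (words_upto m S b)" using assms(3) by (simp add: Lspan_def)
  show "vec.subspace (Lspan m S (a + b))" by (rule Lspan_subspace)
  fix u v assume "u \<in> words_upto m S a" "v \<in> words_upto m S b"
  then obtain i j where "i \<le> a" "word m S u i" "j \<le> b" "word m S v j"
    by (auto simp: words_upto_def)
  then have "m u v \<in> words_upto m S (a+b)"
    unfolding words_upto_def by (auto intro!: exI[of _ "i+j"] word.prod)
  then show "m u v \<in> Lspan m S (a + b)"
    unfolding Lspan_def by (rule vec.span_base)
qed

lemma exists_full:
  fixes m :: "complex^'n \<Rightarrow> complex^'n \<Rightarrow> complex^'n"
  assumes "generates m S"
  shows "\<exists>i. Lspan m S i = UNIV"
proof -
  have "\<forall>b\<in>(cart_basis :: (complex^'n) set). \<exists>i. b \<in> Lspan m S i"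
    using assms by (auto simp: generates_def)
  then obtain f where f: "\<And>b::complex^'n. b \<in> cart_basis \<Longrightarrow> b \<in> Lspan m S (f b)" by metis
  let ?i = "\<Sum>b\<in>cart_basis. f b"
  have "cart_basis \<subseteq> Lspan m S ?i"
  proof
    fix b :: "complex^'n" assume b: "b \<in> cart_basis"
    have "f b \<le> ?i" by (rule member_le_sum) (auto simp: b finite_cart_basis)
    then show "b \<in> Lspan m S ?i" using f[OF b] Lspan_mono by blast
  qed
  then have "vec.span cart_basis \<subseteq> Lspan m S ?i"
    by (rule vec.span_minimal[OF _ Lspan_subspace])
  then show ?thesis by auto
qed


lemma pw_Suc_sub: "pw m (Suc n) \<subseteq> pw m n"
proof (induction n rule: less_induct)
  case (less n)
  consider "n = 0" | "n = 1" | k0 where "n = Suc (Suc k0)" by (metis One_nat_def not0_implies_Suc)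
  then show ?case
  proof cases
    case 1 then show ?thesis by simp
  next
    case 2 then show ?thesis by simp
  next
    case 3
    have gen: "{m x y |x y. x \<in> pw m i \<and> y \<in> pw m (Suc (Suc (Suc k0)) - i)} \<subseteq> pw m (Suc (Suc k0))"
      if i: "i \<in> {1..Suc (Suc k0)}" for i
    proof (rule subsetI, elim CollectE exE conjE)
      fix z x y assume z: "z = m x y" and x: "x \<in> pw m i" and y: "y \<in> pw m (Suc (Suc (Suc k0)) - i)"
      show "z \<in> pw m (Suc (Suc k0))"
      proof (cases "i \<le> Suc k0")
        case True
        have e: "Suc (Suc (Suc k0)) - i = Suc (Suc (Suc k0) - i)" using True by simp
        have "Suc (Suc k0) - i < n" using 3 i by auto
        then have sub: "pw m (Suc (Suc (Suc k0) - i)) \<subseteq> pw m (Suc (Suc k0) - i)" by (rule less.IH)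
        from sub y[unfolded e] have "y \<in> pw m (Suc (Suc k0) - i)" by (rule subsetD)
        then have "z \<in> {m x y |x y. x \<in> pw m i \<and> y \<in> pw m (Suc (Suc k0) - i)}" using z x by blast
        then have "z \<in> (\<Union>i\<in>{1..Suc k0}. {m x y |x y. x \<in> pw m i \<and> y \<in> pw m (Suc (Suc k0) - i)})"
          using i True by (intro UN_I[of i]) auto
        then show ?thesis by (subst pw.simps(3)) (rule vec.span_base)
      next
        case False
        then have ii: "i = Suc (Suc k0)" using i by auto
        have "Suc k0 < n" using 3 by simp
        then have sub: "pw m (Suc (Suc k0)) \<subseteq> pw m (Suc k0)" by (rule less.IH)
        from sub x[unfolded ii] have "x \<in> pw m (Suc k0)" by (rule subsetD)
        moreover have "y \<in> pw m (Suc (Suc k0) - Suc k0)" using y ii by simp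
        ultimately have "z \<in> {m x y |x y. x \<in> pw m (Suc k0) \<and> y \<in> pw m (Suc (Suc k0) - Suc k0)}" using z by blast
        then have "z \<in> (\<Union>i\<in>{1..Suc k0}. {m x y |x y. x \<in> pw m i \<and> y \<in> pw m (Suc (Suc k0) - i)})"
          by (intro UN_I[of "Suc k0"]) auto
        then show ?thesis by (subst pw.simps(3)) (rule vec.span_base)
      qed
    qed
    have "pw m (Suc (Suc (Suc k0))) = vec.span (\<Union>i\<in>{1..Suc (Suc k0)}. {m x y |x y. x \<in> pw m i \<and> y \<in> pw m (Suc (Suc (Suc k0)) - i)})"
      by (rule pw.simps(3))
    also have "\<dots> \<subseteq> pw m (Suc (Suc k0))"
    proof (rule vec.span_minimal)
      show "vec.subspace (pw m (Suc (Suc k0)))" by (subst pw.simps(3)) (rule vec.subspace_span)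
    qed (rule UN_least, rule gen)
    finally show ?thesis using 3 by simp
  qed
qed

lemma pw_mono: "i \<le> j \<Longrightarrow> pw m j \<subseteq> pw m i"
  by (induction j rule: dec_induct) (use pw_Suc_sub in blast)+

lemma linI: "(\<And>x y. f (x+y) = f x + f y) \<Longrightarrow> (\<And>a x. f (a *s x) = a *s f x) \<Longrightarrow>
   Vector_Spaces.linear (*s) (*s) (f :: complex^'n \<Rightarrow> complex^'n)"
  by (simp add: Vector_Spaces.linear_iff vec.vector_space_axioms)



lemma pw_zero: "0 \<in> pw m l"
proof (cases l)
  case (Suc l1) then show ?thesis by (cases l1) (auto intro: vec.span_zero)
qed simp

lemma pw_word: "word m S w l \<Longrightarrow> w \<in> pw m l"
proof (induction rule: word.induct)
  case (single x) then show ?case by simp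
next
  case (prod x i y j)
  have i1: "1 \<le> i" and j1: "1 \<le> j" using prod.hyps word_ge1 by blast+
  then obtain k0 where k0: "i + j = Suc (Suc k0)" by (metis add_le_mono one_add_one Suc_1 le_Suc_ex add_2_eq_Suc)
  have "j = Suc (Suc k0) - i" using k0 by simp
  then have "m x y \<in> {m x y |x y. x \<in> pw m i \<and> y \<in> pw m (Suc (Suc k0) - i)}" using prod.IH by blast
  moreover have "i \<in> {1..Suc k0}" using i1 j1 k0 by auto
  ultimately have "m x y \<in> (\<Union>i\<in>{1..Suc k0}. {m x y |x y. x \<in> pw m i \<and> y \<in> pw m (Suc (Suc k0) - i)})"
    by (rule UN_I[rotated])
  then have "m x y \<in> pw m (Suc (Suc k0))" by (subst pw.simps(3)) (rule vec.span_base)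
  then show ?case using k0 by simp
qed

lemma chain_basis:
  fixes m :: "complex^'n \<Rightarrow> complex^'n \<Rightarrow> complex^'n"
  shows "\<exists>B. vec.independent B \<and> B \<subseteq> Lspan m S l \<and> Lspan m S l \<subseteq> vec.span B \<and>
     (\<forall>l'\<le>l. Lspan m S l' \<subseteq> vec.span {b\<in>B. b \<in> Lspan m S l'})"
proof (induction l)
  case 0
  show ?case by (intro exI[of _ "{}"]) (auto simp: Lspan_0 vec.span_empty vec.independent_empty)
next
  case (Suc l)
  then obtain B where B: "vec.independent B" "B \<subseteq> Lspan m S l" "Lspan m S l \<subseteq> vec.span B"
    "\<forall>l'\<le>l. Lspan m S l' \<subseteq> vec.span {b\<in>B. b \<in> Lspan m S l'}" by blast
  have "B \<subseteq> Lspan m S (Suc l)" using B(2) Lspan_mono[of l "Suc l"] by auto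
  then obtain B' where B': "B \<subseteq> B'" "B' \<subseteq> Lspan m S (Suc l)" "vec.independent B'" "Lspan m S (Suc l) \<subseteq> vec.span B'"
    using vec.maximal_independent_subset_extend B(1) by metis
  have "Lspan m S l' \<subseteq> vec.span {b\<in>B'. b \<in> Lspan m S l'}" if "l' \<le> Suc l" for l'
  proof (cases "l' \<le> l")
    case True
    have "vec.span {b\<in>B. b \<in> Lspan m S l'} \<subseteq> vec.span {b\<in>B'. b \<in> Lspan m S l'}"
      by (rule vec.span_mono) (use B'(1) in auto)
    then show ?thesis using B(4) True by blast
  next
    case False
    then have "l' = Suc l" using that by simp
    then have "{b\<in>B'. b \<in> Lspan m S l'} = B'" using B'(2) by auto
    then show ?thesis using B'(4) \<open>l' = Suc l\<close> by simp
  qed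
  then show ?case using B' by blast
qed

locale adapted =
  fixes m :: "complex^'n \<Rightarrow> complex^'n \<Rightarrow> complex^'n" and S :: "(complex^'n) set"
    and k :: nat and B :: "(complex^'n) set"
  assumes bil: "cbilinear m"
    and anti: "anticommutative m"
    and Vk: "Lspan m S k = UNIV"
    and indB: "vec.independent B" and spanB: "vec.span B = UNIV"
    and Vspan: "\<And>l. Lspan m S l = vec.span {b\<in>B. b \<in> Lspan m S l}"
begin

abbreviation V where "V \<equiv> Lspan m S"

definition d :: "complex^'n \<Rightarrow> nat" where "d b = (LEAST l. b \<in> V l)"
definition c :: "complex^'n \<Rightarrow> complex^'n \<Rightarrow> complex" where "c x b = vec.representation B x b"
definition P :: "nat \<Rightarrow> complex^'n \<Rightarrow> complex^'n" where
  "P l x = (\<Sum>b\<in>B. (if d b = l then c x b else 0) *s b)"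

lemma finB: "finite B" using indB by (rule vec.finiteI_independent)

lemma D1: "b \<in> B \<Longrightarrow> b \<in> V (d b)"
  unfolding d_def by (rule LeastI[of _ k]) (simp add: Vk)

lemma D2: "b \<in> B \<Longrightarrow> b \<in> V l \<longleftrightarrow> d b \<le> l"
  using D1 Lspan_mono unfolding d_def by (metis Least_le subsetD)

lemma D3: "b \<in> B \<Longrightarrow> 1 \<le> d b"
proof (rule ccontr)
  assume b: "b \<in> B" "\<not> 1 \<le> d b"
  then have "b \<in> V 0" using D2 by simp
  then have "b = 0" by (simp add: Lspan_0)
  then show False using b indB vec.dependent_zero by blast
qed

lemma D4: "b \<in> B \<Longrightarrow> d b \<le> k"
  using D2 Vk by blast

lemma R0: "(\<Sum>b\<in>B. c x b *s b) = x"
  unfolding c_def by (rule vec.sum_representation_eq) (auto simp: indB spanB finB)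

lemma c_add: "c (x + y) b = c x b + c y b"
  unfolding c_def by (simp add: vec.representation_add indB spanB)

lemma c_scale: "c (a *s x) b = a * c x b"
  unfolding c_def by (simp add: vec.representation_scale indB spanB)

lemma c_sum: "c (sum f A) b = (\<Sum>i\<in>A. c (f i) b)"
  unfolding c_def by (simp add: vec.representation_sum indB spanB)

lemma c_neg: "c (- x) b = - c x b"
  unfolding c_def by (simp add: vec.representation_neg indB spanB)

lemma c_diff: "c (x - y) b = c x b - c y b"
  unfolding c_def by (simp add: vec.representation_diff indB spanB)

lemma c_comb: "b \<in> B \<Longrightarrow> c (\<Sum>p\<in>B. g p *s p) b = g b"
proof -
  assume b: "b \<in> B"
  have "c (\<Sum>p\<in>B. g p *s p) b = (\<Sum>p\<in>B. g p * c p b)" by (simp add: c_sum c_scale)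
  also have "\<dots> = (\<Sum>p\<in>B. if p = b then g b else 0)"
    by (rule sum.cong) (auto simp: c_def vec.representation_basis indB)
  also have "\<dots> = g b" using b finB by simp
  finally show ?thesis .
qed

lemma c_out: "b \<notin> B \<Longrightarrow> c x b = 0"
  unfolding c_def using vec.representation_ne_zero by blast

lemma c_sub: "T \<subseteq> B \<Longrightarrow> x \<in> vec.span T \<Longrightarrow> b \<notin> T \<Longrightarrow> c x b = 0"
  unfolding c_def using vec.representation_extend[OF indB] vec.representation_ne_zero by metis

lemma crit: "(\<And>b. b \<in> B \<Longrightarrow> \<not> Q b \<Longrightarrow> c x b = 0) \<Longrightarrow> x \<in> vec.span {b\<in>B. Q b}"
proof -
  assume h: "\<And>b. b \<in> B \<Longrightarrow> \<not> Q b \<Longrightarrow> c x b = 0"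
  have "(\<Sum>b\<in>B. c x b *s b) \<in> vec.span {b\<in>B. Q b}"
  proof (rule vec.span_sum)
    fix b assume b: "b \<in> B"
    show "c x b *s b \<in> vec.span {b \<in> B. Q b}"
    proof (cases "Q b")
      case True then show ?thesis using b by (intro vec.span_scale vec.span_base) auto
    next
      case False then show ?thesis using b h by (simp add: vec.span_zero)
    qed
  qed
  then show ?thesis by (simp add: R0)
qed

lemma crit_inv: "x \<in> vec.span {b\<in>B. Q b} \<Longrightarrow> b \<in> B \<Longrightarrow> \<not> Q b \<Longrightarrow> c x b = 0"
  by (rule c_sub) auto

lemma V_eq: "V l = vec.span {b\<in>B. d b \<le> l}"
  using Vspan[of l] D2 by (metis (no_types, lifting) Collect_cong)

lemma V_coef: "x \<in> V l \<Longrightarrow> b \<in> B \<Longrightarrow> l < d b \<Longrightarrow> c x b = 0"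
  unfolding V_eq by (rule crit_inv) auto

lemma V_crit: "(\<And>b. b \<in> B \<Longrightarrow> l < d b \<Longrightarrow> c x b = 0) \<Longrightarrow> x \<in> V l"
  unfolding V_eq by (rule crit) auto

lemma c_P: "c (P l x) b = (if d b = l then c x b else 0)"
  by (cases "b \<in> B") (auto simp: P_def c_comb c_out)

lemma P_in: "P l x \<in> V l"
  by (rule V_crit) (auto simp: c_P)

lemma P_rest: "x \<in> V l \<Longrightarrow> x - P l x \<in> V (l - 1)"
  by (rule V_crit) (auto simp: c_P c_diff V_coef)

lemma P_low: "1 \<le> l \<Longrightarrow> x \<in> V (l - 1) \<Longrightarrow> P l x = 0"
  unfolding P_def by (rule sum.neutral) (auto simp: V_coef)

lemma P_linear: "Vector_Spaces.linear (*s) (*s) (P l)"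
proof (rule linI)
  show "P l (x + y) = P l x + P l y" for x y
    unfolding P_def sum.distrib[symmetric] by (rule sum.cong) (auto simp: c_add vec.scale_left_distrib)
  show "P l (a *s x) = a *s P l x" for a x
    unfolding P_def vec.scale_sum_right by (rule sum.cong) (auto simp: c_scale)
qed

lemma P_add: "P l (x + y) = P l x + P l y" using P_linear by (rule vec.linear_add)
lemma P_scale: "P l (a *s x) = a *s P l x" using P_linear by (rule vec.linear_scale)
lemma P_sum: "P l (sum g A) = (\<Sum>a\<in>A. P l (g a))" using P_linear by (rule vec.linear_sum)
lemma P_neg: "P l (- x) = - P l x" using P_linear by (rule vec.linear_neg)
lemma P_diff: "P l (x - y) = P l x - P l y" using P_linear by (rule vec.linear_diff)

lemma lx: "Vector_Spaces.linear (*s) (*s) (\<lambda>x. m x y)" using bil by (simp add: cbilinear_def)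
lemma ly: "Vector_Spaces.linear (*s) (*s) (\<lambda>y. m x y)" using bil by (simp add: cbilinear_def)
lemma m_sum_l: "m (sum g A) y = (\<Sum>a\<in>A. m (g a) y)" using vec.linear_sum[OF lx] .
lemma m_sum_r: "m x (sum g A) = (\<Sum>a\<in>A. m x (g a))" using vec.linear_sum[OF ly] .
lemma m_scale_l: "m (a *s x) y = a *s m x y" using vec.linear_scale[OF lx] .
lemma m_scale_r: "m x (a *s y) = a *s m x y" using vec.linear_scale[OF ly] .
lemma m_diff_l: "m (x - z) y = m x y - m z y" using vec.linear_diff[OF lx] .
lemma m_diff_r: "m x (y - z) = m x y - m x z" using vec.linear_diff[OF ly] .

lemma V_sub: "vec.subspace (V l)" by (rule Lspan_subspace)
lemma V_mult: "x \<in> V a \<Longrightarrow> y \<in> V b \<Longrightarrow> m x y \<in> V (a + b)" by (rule Lspan_mult[OF bil])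

definition mm :: "complex^'n \<Rightarrow> complex^'n \<Rightarrow> complex^'n" where
  "mm x y = (\<Sum>p\<in>B. \<Sum>q\<in>B. (c x p * c y q) *s P (d p + d q) (m p q))"

lemma mm_bil: "cbilinear mm"
  unfolding cbilinear_def
proof (intro conjI allI)
  fix y
  show "Vector_Spaces.linear (*s) (*s) (\<lambda>x. mm x y)"
  proof (rule linI)
    show "mm (x1 + x2) y = mm x1 y + mm x2 y" for x1 x2
      unfolding mm_def sum.distrib[symmetric]
      by (intro sum.cong refl) (simp add: c_add distrib_right vec.scale_left_distrib)
    show "mm (a *s x) y = a *s mm x y" for a x
      unfolding mm_def by (simp add: c_scale vec.scale_sum_right mult.assoc)
  qed
next
  fix x
  show "Vector_Spaces.linear (*s) (*s) (\<lambda>y. mm x y)"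
  proof (rule linI)
    show "mm x (y1 + y2) = mm x y1 + mm x y2" for y1 y2
      unfolding mm_def sum.distrib[symmetric]
      by (intro sum.cong refl) (simp add: c_add distrib_left vec.scale_left_distrib)
    show "mm x (a *s y) = a *s mm x y" for a y
      unfolding mm_def by (simp add: c_scale vec.scale_sum_right mult.assoc mult.left_commute)
  qed
qed

lemma mm_anti: "anticommutative mm"
  unfolding anticommutative_def
proof (intro allI)
  fix x y
  have "mm y x = (\<Sum>q\<in>B. \<Sum>p\<in>B. (c y p * c x q) *s P (d p + d q) (m p q))"
    unfolding mm_def by (rule sum.swap)
  also have "\<dots> = (\<Sum>q\<in>B. \<Sum>p\<in>B. - ((c x q * c y p) *s P (d q + d p) (m q p)))"
  proof (intro sum.cong refl)
    fix p q
    have "m p q = - m q p" using anti unfolding anticommutative_def by blast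
    then show "(c y p * c x q) *s P (d p + d q) (m p q) = - ((c x q * c y p) *s P (d q + d p) (m q p))"
      by (simp add: P_neg ac_simps)
  qed
  also have "\<dots> = - mm x y" unfolding mm_def by (simp add: sum_negf)
  finally show "mm x y = - mm y x" by simp
qed

lemma K:
  assumes "\<And>p. c x p \<noteq> 0 \<Longrightarrow> d p = i" "\<And>q. c y q \<noteq> 0 \<Longrightarrow> d q = j"
  shows "mm x y = P (i + j) (m x y)"
proof -
  have "m x y = m (\<Sum>p\<in>B. c x p *s p) (\<Sum>q\<in>B. c y q *s q)" by (simp add: R0)
  also have "\<dots> = (\<Sum>p\<in>B. c x p *s m p (\<Sum>q\<in>B. c y q *s q))"
    by (simp only: m_sum_l m_scale_l)
  also have "\<dots> = (\<Sum>p\<in>B. \<Sum>q\<in>B. (c x p * c y q) *s m p q)"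
    by (simp only: m_sum_r m_scale_r vec.scale_sum_right vec.scale_scale)
  finally have e: "P (i + j) (m x y) = (\<Sum>p\<in>B. \<Sum>q\<in>B. (c x p * c y q) *s P (i + j) (m p q))"
    by (simp add: P_sum P_scale)
  show ?thesis unfolding e mm_def
  proof (intro sum.cong refl)
    fix p q
    show "(c x p * c y q) *s P (d p + d q) (m p q) = (c x p * c y q) *s P (i + j) (m p q)"
      using assms by (cases "c x p = 0 \<or> c y q = 0") auto
  qed
qed

definition G :: "nat \<Rightarrow> (complex^'n) set" where "G l = vec.span {b\<in>B. l \<le> d b}"

lemma G_coef: "x \<in> G l \<Longrightarrow> b \<in> B \<Longrightarrow> d b < l \<Longrightarrow> c x b = 0"
  unfolding G_def by (rule crit_inv) auto

lemma G_crit: "(\<And>b. b \<in> B \<Longrightarrow> d b < l \<Longrightarrow> c x b = 0) \<Longrightarrow> x \<in> G l"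
  unfolding G_def by (rule crit) auto

lemma P_G: "l \<le> e \<Longrightarrow> P e z \<in> G l"
  by (rule G_crit) (auto simp: c_P)

lemma mm_G: assumes "x \<in> G i" "y \<in> G j" shows "mm x y \<in> G (i + j)"
  unfolding mm_def G_def
proof (intro vec.span_sum)
  fix p q assume p: "p \<in> B" and q: "q \<in> B"
  show "(c x p * c y q) *s P (d p + d q) (m p q) \<in> vec.span {b \<in> B. i + j \<le> d b}"
  proof (cases "c x p = 0 \<or> c y q = 0")
    case True then show ?thesis by (auto simp: vec.span_zero)
  next
    case False
    then have "i \<le> d p" "j \<le> d q" using G_coef[OF assms(1) p] G_coef[OF assms(2) q] by force+
    then have "P (d p + d q) (m p q) \<in> G (i + j)" by (intro P_G) auto
    then show ?thesis unfolding G_def by (rule vec.span_scale)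
  qed
qed

lemma G_sub: "vec.subspace (G l)" unfolding G_def by (rule vec.subspace_span)

lemma G_1: "G 1 = UNIV"
proof -
  have "{b\<in>B. 1 \<le> d b} = B" using D3 by auto
  then show ?thesis by (simp add: G_def spanB)
qed

lemma G_0: "G 0 = UNIV" by (simp add: G_def spanB)

lemma G_top: "G (Suc k) = {0}"
proof -
  have "{b\<in>B. Suc k \<le> d b} = {}" using D4 by force
  then show ?thesis unfolding G_def by (simp only: vec.span_empty)
qed

lemma pw_G: "pw mm l \<subseteq> G l"
proof (induction l rule: less_induct)
  case (less l)
  consider "l = 0" | "l = 1" | k0 where "l = Suc (Suc k0)" by (metis One_nat_def not0_implies_Suc)
  then show ?case
  proof cases
    case 1 then show ?thesis by (simp add: G_0)
  next
    case 2 then show ?thesis using G_1 by simp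
  next
    case 3
    have gen: "{mm x y |x y. x \<in> pw mm i \<and> y \<in> pw mm (Suc (Suc k0) - i)} \<subseteq> G l"
      if i: "i \<in> {1..Suc k0}" for i
    proof (rule subsetI, elim CollectE exE conjE)
      fix z x y assume z: "z = mm x y" and x: "x \<in> pw mm i" and y: "y \<in> pw mm (Suc (Suc k0) - i)"
      have "i < l" using i 3 by auto
      then have "pw mm i \<subseteq> G i" by (rule less.IH)
      with x have x': "x \<in> G i" by (rule subsetD[rotated])
      have "Suc (Suc k0) - i < l" using i 3 by auto
      then have "pw mm (Suc (Suc k0) - i) \<subseteq> G (Suc (Suc k0) - i)" by (rule less.IH)
      with y have y': "y \<in> G (Suc (Suc k0) - i)" by (rule subsetD[rotated])
      have "mm x y \<in> G (i + (Suc (Suc k0) - i))" by (rule mm_G[OF x' y'])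
      moreover have "i + (Suc (Suc k0) - i) = l" using i 3 by auto
      ultimately show "z \<in> G l" using z by simp
    qed
    have "pw mm (Suc (Suc k0)) = vec.span (\<Union>i\<in>{1..Suc k0}. {mm x y |x y. x \<in> pw mm i \<and> y \<in> pw mm (Suc (Suc k0) - i)})"
      by (rule pw.simps(3))
    also have "\<dots> \<subseteq> G l"
      by (rule vec.span_minimal[OF _ G_sub]) (rule UN_least, rule gen)
    finally show ?thesis using 3 by simp
  qed
qed

lemma word_V: "word m S w l \<Longrightarrow> w \<in> V l"
  unfolding Lspan_def words_upto_def by (rule vec.span_base) auto

lemma word_P: "word m S w l \<Longrightarrow> word mm (P 1 ` S) (P l w) l"
proof (induction rule: word.induct)
  case (single x)
  then show ?case by (intro word.single) auto
next
  case (prod x i y j)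
  have i1: "1 \<le> i" and j1: "1 \<le> j" using prod.hyps word_ge1 by blast+
  have xV: "x \<in> V i" and yV: "y \<in> V j" using prod.hyps word_V by blast+
  have w: "word mm (P 1 ` S) (mm (P i x) (P j y)) (i + j)" using prod.IH by (rule word.prod)
  have eK: "mm (P i x) (P j y) = P (i + j) (m (P i x) (P j y))"
    by (rule K) (auto simp: c_P split: if_splits)
  have "m x y - m (P i x) (P j y) = m (x - P i x) y + m (P i x) (y - P j y)"
    by (simp add: m_diff_l m_diff_r)
  moreover have "m (x - P i x) y \<in> V (i - 1 + j)" by (rule V_mult[OF P_rest[OF xV] yV])
  moreover have "m (P i x) (y - P j y) \<in> V (i + (j - 1))" by (rule V_mult[OF P_in P_rest[OF yV]])
  moreover have "i - 1 + j = i + j - 1" "i + (j - 1) = i + j - 1" using i1 j1 by auto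
  ultimately have "m x y - m (P i x) (P j y) \<in> V (i + j - 1)"
    using vec.subspace_add[OF V_sub] by auto
  then have "P (i + j) (m x y - m (P i x) (P j y)) = 0" by (rule P_low[rotated]) (use i1 in auto)
  then have "P (i + j) (m x y) = mm (P i x) (P j y)" by (simp add: P_diff eK)
  then show ?case using w by simp
qed

lemma final:
  assumes k1: "1 \<le> k" and nf: "V (k - 1) \<noteq> UNIV"
  shows "cbilinear mm \<and> anticommutative mm \<and> nilpotent mm \<and> nilpotency_index mm = k + 1"
proof -
  have "\<not> words_upto m S k \<subseteq> V (k - 1)"
  proof
    assume "words_upto m S k \<subseteq> V (k - 1)"
    then have "vec.span (words_upto m S k) \<subseteq> V (k - 1)" by (rule vec.span_minimal[OF _ V_sub])
    moreover have "V k = vec.span (words_upto m S k)" by (simp add: Lspan_def)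
    ultimately show False using Vk nf by auto
  qed
  then obtain w where wk: "w \<in> words_upto m S k" and wn: "w \<notin> V (k - 1)" by blast
  then obtain l where l: "l \<le> k" "word m S w l" by (auto simp: words_upto_def)
  have lk: "l = k"
  proof (rule ccontr)
    assume "l \<noteq> k" then have "l \<le> k - 1" using l by auto
    then have "w \<in> words_upto m S (k - 1)" using l by (auto simp: words_upto_def)
    then have "w \<in> vec.span (words_upto m S (k - 1))" by (rule vec.span_base)
    then show False using wn by (simp add: Lspan_def)
  qed
  have Pn: "P k w \<noteq> 0"
  proof
    assume "P k w = 0"
    moreover have "w - P k w \<in> V (k - 1)" by (rule P_rest) (simp add: Vk)
    ultimately show False using wn by simp
  qed
  have "P k w \<in> pw mm k" using word_P[OF l(2)] lk pw_word by blast
  then have ne: "pw mm j \<noteq> {0}" if "j \<le> k" for j using pw_mono[OF that, of mm] Pn by blast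
  have top: "pw mm (k + 1) = {0}" using pw_G[of "k + 1"] G_top pw_zero[of mm "k + 1"] by auto
  have nil: "nilpotent mm" unfolding nilpotent_def using top by (intro exI[of _ "k + 1"]) auto
  have idx: "nilpotency_index mm = k + 1"
    unfolding nilpotency_index_def
  proof (rule Least_equality)
    show "1 \<le> k + 1 \<and> pw mm (k + 1) = {0}" using top by simp
    fix y assume y: "1 \<le> y \<and> pw mm y = {0}"
    show "k + 1 \<le> y"
    proof (rule ccontr)
      assume "\<not> k + 1 \<le> y" then have "y \<le> k" by simp
      then show False using ne y by blast
    qed
  qed
  show ?thesis using mm_bil mm_anti nil idx by blast
qed

end

theorem mainTheorem5:
  fixes m :: "complex ^ 'n \<Rightarrow> complex ^ 'n \<Rightarrow> complex ^ 'n" and k :: nat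
  assumes "cbilinear m" and "anticommutative m" and "has_length m k"
  shows "\<exists>m' :: complex ^ 'n \<Rightarrow> complex ^ 'n \<Rightarrow> complex ^ 'n.
           cbilinear m' \<and> anticommutative m' \<and> nilpotent m' \<and> nilpotency_index m' = k + 1"
proof -
  obtain S where S: "finite S" "generates m S" "set_length m S = k"
    using assms(3) unfolding has_length_def by blast
  obtain i0 where i0: "Lspan m S i0 = UNIV" using exists_full[OF S(2)] by blast
  have ex: "1 \<le> max 1 i0 \<and> Lspan m S (max 1 i0) = UNIV"
    using i0 Lspan_mono[of i0 "max 1 i0" m S] by auto
  have kdef: "k = (LEAST i. 1 \<le> i \<and> Lspan m S i = UNIV)" using S(3) by (simp add: set_length_def)
  have kk: "1 \<le> k \<and> Lspan m S k = UNIV" unfolding kdef by (rule LeastI[where P="\<lambda>i. 1 \<le> i \<and> Lspan m S i = UNIV", OF ex])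
  have small: "\<not> (1 \<le> j \<and> Lspan m S j = UNIV)" if "j < k" for j
    using not_less_Least[of j "\<lambda>i. 1 \<le> i \<and> Lspan m S i = UNIV"] that kdef by blast
  have nz: "(UNIV :: (complex^'n) set) \<noteq> {0}"
  proof
    assume "(UNIV :: (complex^'n) set) = {0}"
    then have "(\<chi> i. (1::complex)) = (0 :: complex^'n)" by blast
    then show False by (simp add: vec_eq_iff)
  qed
  have nf: "Lspan m S (k - 1) \<noteq> UNIV"
  proof (cases "k = 1")
    case True then show ?thesis using nz by (simp add: Lspan_0)
  next
    case False then have "1 \<le> k - 1" "k - 1 < k" using kk by auto
    then show ?thesis using small by blast
  qed
  obtain B where B: "vec.independent B" "B \<subseteq> Lspan m S k" "Lspan m S k \<subseteq> vec.span B"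
    "\<forall>l'\<le>k. Lspan m S l' \<subseteq> vec.span {b\<in>B. b \<in> Lspan m S l'}"
    using chain_basis[of m S k] by blast
  have spanB: "vec.span B = UNIV" using B(3) kk by auto
  have Vspan: "Lspan m S l = vec.span {b\<in>B. b \<in> Lspan m S l}" for l
  proof
    show "vec.span {b\<in>B. b \<in> Lspan m S l} \<subseteq> Lspan m S l"
      by (rule vec.span_minimal[OF _ Lspan_subspace]) auto
    show "Lspan m S l \<subseteq> vec.span {b\<in>B. b \<in> Lspan m S l}"
    proof (cases "l \<le> k")
      case True then show ?thesis using B(4) by blast
    next
      case False
      then have "Lspan m S l = UNIV" using Lspan_mono[of k l m S] kk by auto
      then show ?thesis using spanB by simp
    qed
  qed
  interpret A: adapted m S k B
    by unfold_locales (use assms(1,2) kk B(1) spanB Vspan in auto)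
  show ?thesis using A.final kk nf by blast
qed

end
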